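(* Let $s\in\{1,\ldots,d\}$, $M\in\mathbb{R}^{\mathcal{I}}$, $P\subset\mathcal{I}$, and let $G=G^-$ be a TT representation with $G_1,\ldots,G_{s-1}$ left orthogonal and $G_{s+1},\ldots,G_d$ right orthogonal. Let $S:=(M-A^{G^-})|_P$ and define the matrix block $N$ by $N(j):=(G^{<s})^T S_{(s)}(j)\,(G^{>s})^T$ for $j\in\mathcal{I}_s$. For $\alpha\in\mathbb{R}$ let $G^\alpha_s:=G^-_s+\alpha N$. Assume $\sum_{j\in\mathcal{I}_s}\|(G^{<s}N(j)G^{>s})|_{P,s,j}\|_F^2\neq 0$. Then the optimal overrelaxation parameter \[ \alpha^* := \mathrm{argmin}_{\alpha\in\mathbb{R}} \sum_{j\in\mathcal{I}_s}\big\|(G^{<s}\, G^{\alpha}_s(j)\, G^{>s} - M_{(s)}(j))|_{P,s,j}\big\|_F^2 \] is given by \[ \alpha^* = \frac{\sum_{j\in\mathcal{I}_s}\|N(j)\|_F^2}{\sum_{j\in\mathcal{I}_s}\|(G^{<s}N(j)G^{>s})|_{P,s,j}\|_F^2}. \]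
   Context: Let $\mathcal{I}_\mu=\{1,\ldots,n_\mu\}$, $\mathcal{I}=\mathcal{I}_1\times\cdots\times\mathcal{I}_d$. A TT representation with ranks $r_0=1,r_1,\ldots,r_{d-1},r_d=1$ consists of maps $G_\mu:\mathcal{I}_\mu\to\mathbb{R}^{r_{\mu-1}\times r_\mu}$; it represents $A^G_{i_1,\ldots,i_d}=G_1(i_1)\cdots G_d(i_d)$. $G_\mu$ is left orthogonal if $\sum_{i}G_\mu(i)^TG_\mu(i)=I$, right orthogonal if $\sum_i G_\mu(i)G_\mu(i)^T=I$. For $X\in\mathbb{R}^{\mathcal{I}}$, $X|_P$ is the tensor equal to $X$ on $P$ and $0$ elsewhere. $G^{<s}$ is the matrix with rows indexed by $(i_1,\ldots,i_{s-1})$, row $(i_1,\ldots,i_{s-1})$ being $G_1(i_1)\cdots G_{s-1}(i_{s-1})\in\mathbb{R}^{1\times r_{s-1}}$ ($1\times1$ identity if $s=1$); $G^{>s}$ is the matrix with columns indexed by $(i_{s+1},\ldots,i_d)$, column $(i_{s+1},\ldots,i_d)$ being $G_{s+1}(i_{s+1})\cdots G_d(i_d)\in\mathbb{R}^{r_s\times1}$ ($1\times1$ identity if $s=d$). For $X\in\mathbb{R}^{\mathcal{I}}$, $X_{(s)}(j)$ is the matrix with rows $(i_1,\ldots,i_{s-1})$, columns $(i_{s+1},\ldots,i_d)$ and entries $X_{i_1,\ldots,i_{s-1},j,i_{s+1},\ldots,i_d}$. For a matrix $Y$ with rows indexed by $(i_1,\ldots,i_{s-1})$ and columns by $(i_{s+1},\ldots,i_d)$,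 $Y|_{P,s,j}$ sets to zero every entry $((i_1,\ldots,i_{s-1}),(i_{s+1},\ldots,i_d))$ for which $(i_1,\ldots,i_{s-1},j,i_{s+1},\ldots,i_d)\notin P$. *)

theory Defs
  imports Complex_Main "HOL-Library.FuncSet"
begin

text \<open>Mode indices run over 1..d; the index set I_mu is {0..<n mu}
(0-based). A multi-index with modes a..b is an element of the extensional
function space idx n a b. Matrices are functions nat => nat => real whose
dimensions are carried explicitly (ranks r). A TT representation is
G :: nat => nat => (nat => nat => real), where G mu j is the r(mu-1) x r(mu) core
matrix G_mu(j). Tensors are functions (nat => nat) => real on idx n 1 d.\<close>

definition idx :: "(nat \<Rightarrow> nat) \<Rightarrow> nat \<Rightarrow> nat \<Rightarrow> (nat \<Rightarrow> nat) set" where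
  "idx n a b = (\<Pi>\<^sub>E \<mu>\<in>{a..b}. {..<n \<mu>})"

definition mmul :: "nat \<Rightarrow> (nat \<Rightarrow> nat \<Rightarrow> real) \<Rightarrow> (nat \<Rightarrow> nat \<Rightarrow> real) \<Rightarrow> (nat \<Rightarrow> nat \<Rightarrow> real)" where
  "mmul k A B = (\<lambda>p q. \<Sum>c<k. A p c * B c q)"

text \<open>cprod r G i a k = G_a(i_a) G_(a+1)(i_(a+1)) ... G_(a+k-1)(i_(a+k-1)),
  an r(a-1) x r(a+k-1) matrix; the empty product is the r(a-1) x r(a-1) identity.\<close>
fun cprod :: "(nat \<Rightarrow> nat) \<Rightarrow> (nat \<Rightarrow> nat \<Rightarrow> (nat \<Rightarrow> nat \<Rightarrow> real)) \<Rightarrow> (nat \<Rightarrow> nat) \<Rightarrow> nat \<Rightarrow> nat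
      \<Rightarrow> (nat \<Rightarrow> nat \<Rightarrow> real)" where
  "cprod r G i a 0 = (\<lambda>p q. if p = q then 1 else 0)"
| "cprod r G i a (Suc k) = mmul (r (a + k - 1)) (cprod r G i a k) (G (a + k) (i (a + k)))"

definition tt_tensor :: "nat \<Rightarrow> (nat \<Rightarrow> nat) \<Rightarrow> (nat \<Rightarrow> nat \<Rightarrow> (nat \<Rightarrow> nat \<Rightarrow> real)) \<Rightarrow> (nat \<Rightarrow> nat) \<Rightarrow> real" where
  "tt_tensor d r G i = cprod r G i 1 d 0 0"

definition left_orth :: "(nat \<Rightarrow> nat) \<Rightarrow> (nat \<Rightarrow> nat) \<Rightarrow> (nat \<Rightarrow> nat \<Rightarrow> nat \<Rightarrow> real) \<Rightarrow> nat \<Rightarrow> bool" where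
  "left_orth n r C \<mu> \<longleftrightarrow> (\<forall>a<r \<mu>. \<forall>b<r \<mu>.
      (\<Sum>i<n \<mu>. \<Sum>c<r (\<mu> - 1). C i c a * C i c b) = (if a = b then 1 else 0))"

definition right_orth :: "(nat \<Rightarrow> nat) \<Rightarrow> (nat \<Rightarrow> nat) \<Rightarrow> (nat \<Rightarrow> nat \<Rightarrow> nat \<Rightarrow> real) \<Rightarrow> nat \<Rightarrow> bool" where
  "right_orth n r C \<mu> \<longleftrightarrow> (\<forall>a<r (\<mu> - 1). \<forall>b<r (\<mu> - 1).
      (\<Sum>i<n \<mu>. \<Sum>c<r \<mu>. C i a c * C i b c) = (if a = b then 1 else 0))"

text \<open>Full multi-index (i_1..i_(s-1), j, i_(s+1)..i_d) from a row index, j, and a column index.\<close>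
definition merge :: "nat \<Rightarrow> (nat \<Rightarrow> nat) \<Rightarrow> nat \<Rightarrow> (nat \<Rightarrow> nat) \<Rightarrow> (nat \<Rightarrow> nat)" where
  "merge s \<rho> j \<kappa> = (\<lambda>\<mu>. if \<mu> < s then \<rho> \<mu> else if \<mu> = s then j else \<kappa> \<mu>)"


text \<open>Row (i_1..i_(s-1)) of G^{<s} (a 1 x r(s-1) row vector) and column (i_(s+1)..i_d)
  of G^{>s} (an r(s) x 1 column vector).\<close>
definition Gless :: "(nat \<Rightarrow> nat) \<Rightarrow> (nat \<Rightarrow> nat \<Rightarrow> (nat \<Rightarrow> nat \<Rightarrow> real)) \<Rightarrow> nat \<Rightarrow> (nat \<Rightarrow> nat) \<Rightarrow> nat \<Rightarrow> real" where
  "Gless r G s \<rho> c = cprod r G \<rho> 1 (s - 1) 0 c"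

definition Ggtr :: "nat \<Rightarrow> (nat \<Rightarrow> nat) \<Rightarrow> (nat \<Rightarrow> nat \<Rightarrow> (nat \<Rightarrow> nat \<Rightarrow> real)) \<Rightarrow> nat \<Rightarrow> (nat \<Rightarrow> nat) \<Rightarrow> nat \<Rightarrow> real" where
  "Ggtr d r G s \<kappa> c = cprod r G \<kappa> (s + 1) (d - s) c 0"

text \<open>Entry (rho, kappa) of G^{<s} X G^{>s} for an r(s-1) x r(s) matrix X.\<close>
definition sandwich :: "nat \<Rightarrow> (nat \<Rightarrow> nat) \<Rightarrow> (nat \<Rightarrow> nat \<Rightarrow> (nat \<Rightarrow> nat \<Rightarrow> real)) \<Rightarrow> nat
     \<Rightarrow> (nat \<Rightarrow> nat \<Rightarrow> real) \<Rightarrow> (nat \<Rightarrow> nat) \<Rightarrow> (nat \<Rightarrow> nat) \<Rightarrow> real" where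
  "sandwich d r G s X \<rho> \<kappa> = (\<Sum>a<r (s - 1). \<Sum>b<r s. Gless r G s \<rho> a * X a b * Ggtr d r G s \<kappa> b)"

definition restr :: "(nat \<Rightarrow> nat) set \<Rightarrow> ((nat \<Rightarrow> nat) \<Rightarrow> real) \<Rightarrow> (nat \<Rightarrow> nat) \<Rightarrow> real" where
  "restr P X i = (if i \<in> P then X i else 0)"

definition Nblock :: "nat \<Rightarrow> (nat \<Rightarrow> nat) \<Rightarrow> (nat \<Rightarrow> nat) \<Rightarrow> (nat \<Rightarrow> nat \<Rightarrow> (nat \<Rightarrow> nat \<Rightarrow> real)) \<Rightarrow> nat
     \<Rightarrow> ((nat \<Rightarrow> nat) \<Rightarrow> real) \<Rightarrow> nat \<Rightarrow> nat \<Rightarrow> nat \<Rightarrow> real" where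
  "Nblock d n r G s S j a b = (\<Sum>\<rho>\<in>idx n 1 (s - 1). \<Sum>\<kappa>\<in>idx n (s + 1) d.
       Gless r G s \<rho> a * S (merge s \<rho> j \<kappa>) * Ggtr d r G s \<kappa> b)"

text \<open>Squared Frobenius norm of Y|_{P,s,j}, Y having rows idx n 1 (s-1), columns idx n (s+1) d.\<close>
definition fro2_restr :: "nat \<Rightarrow> (nat \<Rightarrow> nat) \<Rightarrow> nat \<Rightarrow> (nat \<Rightarrow> nat) set \<Rightarrow> nat
     \<Rightarrow> ((nat \<Rightarrow> nat) \<Rightarrow> (nat \<Rightarrow> nat) \<Rightarrow> real) \<Rightarrow> real" where
  "fro2_restr d n s P j Y = (\<Sum>\<rho>\<in>idx n 1 (s - 1). \<Sum>\<kappa>\<in>idx n (s + 1) d.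
       (if merge s \<rho> j \<kappa> \<in> P then (Y \<rho> \<kappa>)\<^sup>2 else 0))"

definition fro2 :: "nat \<Rightarrow> nat \<Rightarrow> (nat \<Rightarrow> nat \<Rightarrow> real) \<Rightarrow> real" where
  "fro2 p q X = (\<Sum>a<p. \<Sum>b<q. (X a b)\<^sup>2)"

end

theory Submission
  imports Defs
begin

lemma cprod_cong:
  "(\<And>\<mu>. a \<le> \<mu> \<Longrightarrow> \<mu> < a + k \<Longrightarrow> i \<mu> = i' \<mu>) \<Longrightarrow> cprod r G i a k = cprod r G i' a k"
  by (induction k) auto

lemma cprod_split:
  "0 < m \<or> q < r (a+k+m-1) \<Longrightarrow>
   cprod r G i a (k+m) p q = (\<Sum>e<r (a+k-1). cprod r G i a k p e * cprod r G i (a+k) m e q)"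
proof (induction m arbitrary: q)
  case 0
  then show ?case by (simp add: if_distrib[of "\<lambda>x. _ * x"] sum.delta' cong: if_cong)
next
  case (Suc m)
  have "cprod r G i a (k + Suc m) p q
     = (\<Sum>c<r (a+k+m-1). cprod r G i a (k+m) p c * G (a+k+m) (i (a+k+m)) c q)"
    by (simp add: mmul_def add.assoc)
  also have "\<dots> = (\<Sum>c<r (a+k+m-1). (\<Sum>e<r (a+k-1). cprod r G i a k p e * cprod r G i (a+k) m e c) * G (a+k+m) (i (a+k+m)) c q)"
    using Suc.IH by (intro sum.cong) auto
  also have "\<dots> = (\<Sum>e<r (a+k-1). cprod r G i a k p e * (\<Sum>c<r (a+k+m-1). cprod r G i (a+k) m e c * G (a+k+m) (i (a+k+m)) c q))"
    by (simp add: sum_distrib_left sum_distrib_right mult.assoc) (rule sum.swap)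
  also have "\<dots> = (\<Sum>e<r (a+k-1). cprod r G i a k p e * cprod r G i (a+k) (Suc m) e q)"
    by (simp add: mmul_def add.assoc)
  finally show ?case .
qed

lemma tt_sandwich:
  assumes s: "1 \<le> s" "s \<le> d" and rd: "r d = 1"
  shows "tt_tensor d r G (merge s \<rho> j \<kappa>) = sandwich d r G s (G s j) \<rho> \<kappa>"
proof -
  let ?i = "merge s \<rho> j \<kappa>"
  have d1: "d = (s-1) + (d-s+1)" using s by simp
  have "tt_tensor d r G ?i = cprod r G ?i 1 ((s-1) + (d-s+1)) 0 0"
    unfolding tt_tensor_def using d1 by simp
  also have "\<dots> = (\<Sum>e<r (s-1). cprod r G ?i 1 (s-1) 0 e * cprod r G ?i s (d-s+1) e 0)"
    using s by (subst cprod_split) auto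
  also have "\<dots> = (\<Sum>e<r (s-1). Gless r G s \<rho> e * (\<Sum>c<r s. G s j e c * Ggtr d r G s \<kappa> c))"
  proof (intro sum.cong refl)
    fix e assume e: "e \<in> {..<r (s-1)}"
    have g1: "cprod r G ?i 1 (s-1) = cprod r G \<rho> 1 (s-1)"
      by (rule cprod_cong) (auto simp: merge_def)
    have "cprod r G ?i s (1 + (d-s)) e 0 = (\<Sum>c<r (s+1-1). cprod r G ?i s 1 e c * cprod r G ?i (s+1) (d-s) c 0)"
      using s rd by (subst cprod_split) auto
    also have "\<dots> = (\<Sum>c<r s. G s j e c * Ggtr d r G s \<kappa> c)"
    proof (intro sum.cong)
      show "{..<r (s+1-1)} = {..<r s}" by simp
      fix c
      have "cprod r G ?i (s+1) (d-s) = cprod r G \<kappa> (s+1) (d-s)"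
        by (rule cprod_cong) (auto simp: merge_def)
      moreover have "cprod r G ?i s 1 e c = G s j e c"
        using e s by (simp add: mmul_def merge_def if_distrib[of "\<lambda>x. x * _"] sum.delta cong: if_cong)
      ultimately show "cprod r G ?i s 1 e c * cprod r G ?i (s+1) (d-s) c 0 = G s j e c * Ggtr d r G s \<kappa> c"
        by (simp add: Ggtr_def)
    qed
    finally have "cprod r G ?i s (d-s+1) e 0 = (\<Sum>c<r s. G s j e c * Ggtr d r G s \<kappa> c)" by simp
    then show "cprod r G ?i 1 (s-1) 0 e * cprod r G ?i s (d-s+1) e 0 = Gless r G s \<rho> e * (\<Sum>c<r s. G s j e c * Ggtr d r G s \<kappa> c)"
      using g1 by (simp add: Gless_def)
  qed
  also have "\<dots> = sandwich d r G s (G s j) \<rho> \<kappa>"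
    by (simp add: sandwich_def sum_distrib_left mult.assoc)
  finally show ?thesis .
qed

lemma sandwich_lin:
  "sandwich d r G s (\<lambda>a b. X a b + \<alpha> * Y a b) \<rho> \<kappa> = sandwich d r G s X \<rho> \<kappa> + \<alpha> * sandwich d r G s Y \<rho> \<kappa>"
  by (simp add: sandwich_def algebra_simps sum.distrib sum_distrib_left)

lemma sum4_swap:
  "(\<Sum>x\<in>A. \<Sum>y\<in>B. \<Sum>u\<in>C. \<Sum>v\<in>D. f x y u v) = (\<Sum>u\<in>C. \<Sum>v\<in>D. \<Sum>x\<in>A. \<Sum>y\<in>B. f x y u v)"
proof -
  have "(\<Sum>x\<in>A. \<Sum>y\<in>B. \<Sum>u\<in>C. \<Sum>v\<in>D. f x y u v) = (\<Sum>x\<in>A. \<Sum>u\<in>C. \<Sum>y\<in>B. \<Sum>v\<in>D. f x y u v)"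
    by (rule sum.cong[OF refl], rule sum.swap)
  also have "\<dots> = (\<Sum>u\<in>C. \<Sum>x\<in>A. \<Sum>y\<in>B. \<Sum>v\<in>D. f x y u v)" by (rule sum.swap)
  also have "\<dots> = (\<Sum>u\<in>C. \<Sum>x\<in>A. \<Sum>v\<in>D. \<Sum>y\<in>B. f x y u v)"
    by (intro sum.cong refl sum.swap)
  also have "\<dots> = (\<Sum>u\<in>C. \<Sum>v\<in>D. \<Sum>x\<in>A. \<Sum>y\<in>B. f x y u v)"
    by (intro sum.cong refl sum.swap)
  finally show ?thesis .
qed

lemma cross:
  "(\<Sum>\<rho>\<in>idx n 1 (s - 1). \<Sum>\<kappa>\<in>idx n (s + 1) d. S (merge s \<rho> j \<kappa>) * sandwich d r G s (Nblock d n r G s S j) \<rho> \<kappa>)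
   = fro2 (r (s - 1)) (r s) (Nblock d n r G s S j)"
proof -
  let ?N = "Nblock d n r G s S j"
  have "(\<Sum>\<rho>\<in>idx n 1 (s - 1). \<Sum>\<kappa>\<in>idx n (s + 1) d. S (merge s \<rho> j \<kappa>) * sandwich d r G s ?N \<rho> \<kappa>)
     = (\<Sum>\<rho>\<in>idx n 1 (s - 1). \<Sum>\<kappa>\<in>idx n (s + 1) d. \<Sum>a<r (s - 1). \<Sum>b<r s. ?N a b * (Gless r G s \<rho> a * S (merge s \<rho> j \<kappa>) * Ggtr d r G s \<kappa> b))"
    by (simp add: sandwich_def sum_distrib_left mult.commute mult.left_commute)
  also have "\<dots> = (\<Sum>a<r (s - 1). \<Sum>b<r s. ?N a b * (\<Sum>\<rho>\<in>idx n 1 (s - 1). \<Sum>\<kappa>\<in>idx n (s + 1) d. Gless r G s \<rho> a * S (merge s \<rho> j \<kappa>) * Ggtr d r G s \<kappa> b))"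
    by (subst sum4_swap) (simp add: sum_distrib_left)
  also have "\<dots> = fro2 (r (s - 1)) (r s) ?N"
    by (simp add: fro2_def power2_eq_square Nblock_def)
  finally show ?thesis .
qed

theorem lemma3p14:
  fixes d s :: nat and n r :: "nat \<Rightarrow> nat"
    and G :: "nat \<Rightarrow> nat \<Rightarrow> (nat \<Rightarrow> nat \<Rightarrow> real)"
    and M :: "(nat \<Rightarrow> nat) \<Rightarrow> real" and P :: "(nat \<Rightarrow> nat) set"
  assumes s: "1 \<le> s" "s \<le> d"
    and r0: "r 0 = 1" and rd: "r d = 1"
    and P: "P \<subseteq> idx n 1 d"
    and lo: "\<And>\<mu>. 1 \<le> \<mu> \<Longrightarrow> \<mu> < s \<Longrightarrow> left_orth n r (G \<mu>) \<mu>"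
    and ro: "\<And>\<mu>. s < \<mu> \<Longrightarrow> \<mu> \<le> d \<Longrightarrow> right_orth n r (G \<mu>) \<mu>"
    and den: "(\<Sum>j<n s. fro2_restr d n s P j
                 (sandwich d r G s (Nblock d n r G s (restr P (\<lambda>i. M i - tt_tensor d r G i)) j))) \<noteq> 0"
  shows "{\<alpha>::real. \<forall>\<beta>::real.
            (\<Sum>j<n s. fro2_restr d n s P j (\<lambda>\<rho> \<kappa>.
               sandwich d r G s (\<lambda>a b. G s j a b + \<alpha> * Nblock d n r G s (restr P (\<lambda>i. M i - tt_tensor d r G i)) j a b) \<rho> \<kappa>
               - M (merge s \<rho> j \<kappa>)))
          \<le> (\<Sum>j<n s. fro2_restr d n s P j (\<lambda>\<rho> \<kappa>.
               sandwich d r G s (\<lambda>a b. G s j a b + \<beta> * Nblock d n r G s (restr P (\<lambda>i. M i - tt_tensor d r G i)) j a b) \<rho> \<kappa>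
               - M (merge s \<rho> j \<kappa>)))}
         = {(\<Sum>j<n s. fro2 (r (s - 1)) (r s) (Nblock d n r G s (restr P (\<lambda>i. M i - tt_tensor d r G i)) j))
            / (\<Sum>j<n s. fro2_restr d n s P j
                 (sandwich d r G s (Nblock d n r G s (restr P (\<lambda>i. M i - tt_tensor d r G i)) j)))}"
proof -
  define T where "T = restr P (\<lambda>i. M i - tt_tensor d r G i)"
  define B where "B j = sandwich d r G s (Nblock d n r G s T j)" for j
  define D where "D = (\<Sum>j<n s. fro2_restr d n s P j (B j))"
  define F where "F = (\<Sum>j<n s. fro2 (r (s - 1)) (r s) (Nblock d n r G s T j))"
  define C where "C = (\<Sum>j<n s. \<Sum>\<rho>\<in>idx n 1 (s - 1). \<Sum>\<kappa>\<in>idx n (s + 1) d. (T (merge s \<rho> j \<kappa>))\<^sup>2)"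
  define f where "f \<beta> = (\<Sum>j<n s. fro2_restr d n s P j (\<lambda>\<rho> \<kappa>.
               sandwich d r G s (\<lambda>a b. G s j a b + \<beta> * Nblock d n r G s T j a b) \<rho> \<kappa>
               - M (merge s \<rho> j \<kappa>)))" for \<beta>
  have tm: "(if merge s \<rho> j \<kappa> \<in> P then (sandwich d r G s (\<lambda>a b. G s j a b + \<beta> * Nblock d n r G s T j a b) \<rho> \<kappa>
               - M (merge s \<rho> j \<kappa>))\<^sup>2 else 0)
      = \<beta>\<^sup>2 * (if merge s \<rho> j \<kappa> \<in> P then (B j \<rho> \<kappa>)\<^sup>2 else 0) - 2 * \<beta> * (T (merge s \<rho> j \<kappa>) * B j \<rho> \<kappa>)
        + (T (merge s \<rho> j \<kappa>))\<^sup>2" for \<beta> j \<rho> \<kappa>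
    using tt_sandwich[of s d r G \<rho> j \<kappa>, OF s rd]
    by (simp add: sandwich_lin T_def restr_def B_def power2_eq_square algebra_simps)
  have cr: "(\<Sum>\<rho>\<in>idx n 1 (s - 1). \<Sum>\<kappa>\<in>idx n (s + 1) d. c * (T (merge s \<rho> j \<kappa>) * B j \<rho> \<kappa>))
     = c * fro2 (r (s - 1)) (r s) (Nblock d n r G s T j)" for c j
    using cross[where S=T and n=n and s=s and d=d and j=j and r=r and G=G]
    by (simp add: B_def sum_distrib_left[symmetric])
  have fq: "f \<beta> = \<beta>\<^sup>2 * D - 2 * \<beta> * F + C" for \<beta>
    unfolding f_def fro2_restr_def tm D_def F_def C_def
    apply (simp add: sum.distrib sum_subtractf sum_distrib_left)
    using cr by simp
  have D0: "D \<ge> 0" unfolding D_def fro2_restr_def by (intro sum_nonneg) auto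
  have Dpos: "D > 0" using D0 den unfolding D_def B_def T_def by simp
  have key: "f \<beta> - f (F / D) = D * (\<beta> - F / D)\<^sup>2" for \<beta>
    using Dpos by (simp add: fq field_simps power2_eq_square)
  have "{\<alpha>. \<forall>\<beta>. f \<alpha> \<le> f \<beta>} = {F / D}"
  proof (intro set_eqI iffI)
    fix \<alpha> assume "\<alpha> \<in> {\<alpha>. \<forall>\<beta>. f \<alpha> \<le> f \<beta>}"
    hence "f \<alpha> \<le> f (F / D)" by auto
    hence "D * (\<alpha> - F / D)\<^sup>2 \<le> 0" using key[of \<alpha>] by simp
    hence "(\<alpha> - F / D)\<^sup>2 \<le> 0" using Dpos by (simp add: mult_le_0_iff)
    thus "\<alpha> \<in> {F / D}" by simp
  next
    fix \<alpha> assume "\<alpha> \<in> {F / D}"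
    thus "\<alpha> \<in> {\<alpha>. \<forall>\<beta>. f \<alpha> \<le> f \<beta>}" using key Dpos by auto (metis diff_ge_0_iff_ge zero_le_power2 mult_nonneg_nonneg less_imp_le)
  qed
  thus ?thesis unfolding f_def F_def D_def B_def T_def .
qed

end
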